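(* Let $K_0:(0,\infty)\to\mathbb{R}$ be such that $-K_0'$ is a nonzero completely monotone function, i.e. $-K_0'(t)=\int_0^\infty e^{-tx}\,\mathrm{d}\mu(x)$ for all $t>0$ for a nonnegative Borel measure $\mu$ on $[0,\infty)$, and let $b>0$. Then for every $n\in\mathbb{N}^\star$, $$\lambda_{n,b}:=\int_0^{2\pi}K_0(|b-be^{i\eta}|)\,e^{in\eta}\,\mathrm{d}\eta=2\int_0^\infty\phi_n(bx)\,\frac{\mathrm{d}\mu(x)}{x},\qquad\text{where}\quad \phi_n(x):=\int_0^\pi e^{-2x\sin\eta}\,e^{2in\eta}\,\mathrm{d}\eta.$$
   Context: A function $f:(0,\infty)\to\mathbb{R}$ is completely monotone if it is $C^\infty$ and $(-1)^nf^{(n)}(t)\ge0$ for all $t>0$, $n\ge0$; by Bernstein's theorem such $f$ is the Laplace transform of a nonnegative measure on $[0,\infty)$. *)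

theory Defs
  imports "HOL-Analysis.Analysis"
begin

definition phi :: "nat \<Rightarrow> real \<Rightarrow> complex" where
  "phi n x = (LBINT \<eta>=0..pi. complex_of_real (exp (- 2 * x * sin \<eta>))
                              * exp (\<i> * complex_of_real (2 * real n * \<eta>)))"

text \<open>The integrand phi_n(b x)/x of the right-hand side, extended at x = 0 by its
  limit b * phi_n'(0) = -2 b * integral over [0,pi] of sin eta exp(2 i n eta)
  (relevant only if mu has an atom at 0).\<close>
definition phi_div :: "nat \<Rightarrow> real \<Rightarrow> real \<Rightarrow> complex" where
  "phi_div n b x = (if x = 0
     then - 2 * complex_of_real b * (LBINT \<eta>=0..pi. complex_of_real (sin \<eta>)
                              * exp (\<i> * complex_of_real (2 * real n * \<eta>)))
     else phi n (b * x) / complex_of_real x)"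

end

theory Submission
  imports Defs
begin


lemma einterval0[simp]: "einterval 0 (ereal x) = {0<..<x}"
  by (auto simp: einterval_def)

lemma subst2:
  fixes f :: "real \<Rightarrow> complex"
  shows "(LBINT \<eta>=0..2*pi. f \<eta>) = 2 * (LBINT \<theta>=0..pi. f (2*\<theta>))"
proof -
  have "(LBINT \<eta>=0..2*pi. f \<eta>) = (\<integral>\<eta>. indicator {0<..<2*pi} \<eta> *\<^sub>R f \<eta> \<partial>lborel)"
    by (simp add: interval_lebesgue_integral_def set_lebesgue_integral_def)
  also have "\<dots> = \<bar>2\<bar> *\<^sub>R (\<integral>\<theta>. indicator {0<..<2*pi} (0 + 2 * \<theta>) *\<^sub>R f (0 + 2 * \<theta>) \<partial>lborel)"
    by (rule lborel_integral_real_affine) simp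
  also have "(\<lambda>\<theta>. indicator {0<..<2*pi} (0 + 2 * \<theta>) *\<^sub>R f (0 + 2 * \<theta>)) =
      (\<lambda>\<theta>::real. indicator {0<..<pi} \<theta> *\<^sub>R f (2 * \<theta>))"
    by (auto simp: indicator_def fun_eq_iff)
  also have "(\<integral>\<theta>. indicator {0<..<pi} \<theta> *\<^sub>R f (2 * \<theta>) \<partial>lborel) = (LBINT \<theta>=0..pi. f (2*\<theta>))"
    by (simp add: interval_lebesgue_integral_def set_lebesgue_integral_def)
  finally show ?thesis by (simp add: scaleR_conv_of_real)
qed

lemma r_double:
  assumes "0 \<le> \<theta>" "\<theta> \<le> pi" "b > 0"
  shows "cmod (complex_of_real b - complex_of_real b * exp (\<i> * complex_of_real (2*\<theta>))) = 2 * b * sin \<theta>"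
proof -
  have s: "sin \<theta> \<ge> 0" using assms by (simp add: sin_ge_zero)
  have "complex_of_real b - complex_of_real b * exp (\<i> * complex_of_real (2*\<theta>))
      = Complex (b - b * cos (2*\<theta>)) (- b * sin (2*\<theta>))"
    unfolding cis_conv_exp[symmetric] by (simp add: complex_eq_iff)
  also have "\<dots> = Complex (2 * b * sin \<theta> * sin \<theta>) (- 2 * b * sin \<theta> * cos \<theta>)"
  proof -
    have c2: "cos (2*\<theta>) = 1 - 2 * (sin \<theta>)^2" by (rule cos_double_sin)
    have s2: "sin (2*\<theta>) = 2 * sin \<theta> * cos \<theta>" by (rule sin_double)
    show ?thesis by (simp only: c2 s2) (simp add: power2_eq_square algebra_simps)
  qed
  finally have eqz: "complex_of_real b - complex_of_real b * exp (\<i> * complex_of_real (2*\<theta>))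
      = Complex (2 * b * sin \<theta> * sin \<theta>) (- 2 * b * sin \<theta> * cos \<theta>)" .
  have "cmod (complex_of_real b - complex_of_real b * exp (\<i> * complex_of_real (2*\<theta>)))
      = sqrt ((2 * b * sin \<theta> * sin \<theta>)^2 + (- 2 * b * sin \<theta> * cos \<theta>)^2)"
    unfolding eqz cmod_def by simp
  also have "(2 * b * sin \<theta> * sin \<theta>)^2 + (- 2 * b * sin \<theta> * cos \<theta>)^2
     = (2 * b * sin \<theta>)^2 * ((sin \<theta>)^2 + (cos \<theta>)^2)"
    by algebra
  also have "\<dots> = (2 * b * sin \<theta>)^2" by simp
  also have "sqrt ((2 * b * sin \<theta>)^2) = 2 * b * sin \<theta>" using s assms by simp
  finally show ?thesis .
qed

lemma exp_int_zero:
  assumes "n \<ge> 1"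
  shows "(LBINT \<theta>=0..pi. exp (\<i> * complex_of_real (2 * real n * \<theta>))) = 0"
proof -
  define c where "c = \<i> * complex_of_real (2 * real n)"
  have c0: "c \<noteq> 0" using assms by (simp add: c_def)
  have eq: "(\<lambda>\<theta>. exp (\<i> * complex_of_real (2 * real n * \<theta>))) = (\<lambda>\<theta>. exp (c * complex_of_real \<theta>))"
    by (simp add: c_def fun_eq_iff algebra_simps)
  have "(LBINT \<theta>=ereal 0..ereal pi. exp (c * complex_of_real \<theta>)) = exp (c * complex_of_real pi) / c - exp (c * complex_of_real 0) / c"
  proof (rule interval_integral_FTC_finite)
    show "continuous_on {min 0 pi..max 0 pi} (\<lambda>\<theta>. exp (c * complex_of_real \<theta>))"
      by (intro continuous_intros)
    fix x :: real
    have "((\<lambda>z. exp (c * z) / c) has_field_derivative exp (c * complex_of_real x)) (at (complex_of_real x))"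
      using c0 by (auto intro!: derivative_eq_intros)
    then show "((\<lambda>\<theta>. exp (c * complex_of_real \<theta>) / c) has_vector_derivative exp (c * complex_of_real x)) (at x within {min 0 pi..max 0 pi})"
      by (rule has_vector_derivative_real_field)
  qed
  also have "exp (c * complex_of_real pi) = 1"
  proof -
    have "c * complex_of_real pi = of_nat n * (2 * of_real pi * \<i>)" by (simp add: c_def)
    then show ?thesis by (simp only: exp_of_nat_mult exp_two_pi_i power_one)
  qed
  finally show ?thesis using eq by (simp add: zero_ereal_def)
qed


definition gfun :: "real \<Rightarrow> real \<Rightarrow> real" where
  "gfun t x = (if x = 0 then t - 1 else (exp (- x) - exp (- t * x)) / x)"

lemma LBINT0: "c \<ge> 0 \<Longrightarrow> (LBINT x=0..ereal c. f x) = (LINT x:{0..c}|lborel. f x)"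
  using interval_integral_Icc[of 0 c f] by (simp add: zero_ereal_def)

lemma inner_eq:
  assumes b: "b > 0" and n: "n \<ge> 1"
  shows "(LBINT \<eta>=0..2*pi. complex_of_real (gfun (cmod (complex_of_real b - complex_of_real b * exp (\<i> * complex_of_real \<eta>))) x)
            * exp (\<i> * complex_of_real (real n * \<eta>))) = - 2 * phi_div n b x"
proof -
  define e2 where "e2 = (\<lambda>\<theta>. exp (\<i> * complex_of_real (2 * real n * \<theta>)))"
  have ce2: "continuous_on {0..pi} e2" unfolding e2_def by (intro continuous_intros)
  have ie2: "set_integrable lborel {0..pi} e2" by (rule borel_integrable_atLeastAtMost'[OF ce2])
  have z: "(LINT \<theta>:{0..pi}|lborel. e2 \<theta>) = 0"
    unfolding e2_def using exp_int_zero[OF n] by (simp only: LBINT0[OF pi_ge_zero])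
  have "(LBINT \<eta>=0..2*pi. complex_of_real (gfun (cmod (complex_of_real b - complex_of_real b * exp (\<i> * complex_of_real \<eta>))) x)
            * exp (\<i> * complex_of_real (real n * \<eta>)))
      = 2 * (LBINT \<theta>=0..pi. complex_of_real (gfun (cmod (complex_of_real b - complex_of_real b * exp (\<i> * complex_of_real (2*\<theta>)))) x)
            * exp (\<i> * complex_of_real (real n * (2*\<theta>))))"
    by (rule subst2)
  also have "(LBINT \<theta>=0..pi. complex_of_real (gfun (cmod (complex_of_real b - complex_of_real b * exp (\<i> * complex_of_real (2*\<theta>)))) x)
            * exp (\<i> * complex_of_real (real n * (2*\<theta>))))
      = (LINT \<theta>:{0..pi}|lborel. complex_of_real (gfun (2 * b * sin \<theta>) x) * e2 \<theta>)"
    unfolding LBINT0[OF pi_ge_zero]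
  proof (rule set_lebesgue_integral_cong)
    show "{0..pi} \<in> sets lborel" by simp
    show "\<forall>\<theta>. \<theta> \<in> {0..pi} \<longrightarrow> complex_of_real (gfun (cmod (complex_of_real b - complex_of_real b * exp (\<i> * complex_of_real (2*\<theta>)))) x)
            * exp (\<i> * complex_of_real (real n * (2*\<theta>))) = complex_of_real (gfun (2 * b * sin \<theta>) x) * e2 \<theta>"
    proof (intro allI impI)
      fix \<theta> :: real assume "\<theta> \<in> {0..pi}"
      then have rd: "cmod (complex_of_real b - complex_of_real b * exp (\<i> * complex_of_real (2*\<theta>))) = 2 * b * sin \<theta>"
        using r_double[OF _ _ b] by auto
      show "complex_of_real (gfun (cmod (complex_of_real b - complex_of_real b * exp (\<i> * complex_of_real (2*\<theta>)))) x)
            * exp (\<i> * complex_of_real (real n * (2*\<theta>))) = complex_of_real (gfun (2 * b * sin \<theta>) x) * e2 \<theta>"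
        unfolding rd by (simp add: e2_def mult_ac)
    qed
  qed
  also have "\<dots> = - phi_div n b x"
  proof (cases "x = 0")
    case True
    have cs: "continuous_on {0..pi} (\<lambda>\<theta>. complex_of_real (sin \<theta>) * e2 \<theta>)"
      using ce2 by (intro continuous_intros)
    have isb: "set_integrable lborel {0..pi} (\<lambda>\<theta>. complex_of_real (sin \<theta>) * e2 \<theta>)"
      by (rule borel_integrable_atLeastAtMost'[OF cs])
    have "(LINT \<theta>:{0..pi}|lborel. complex_of_real (gfun (2 * b * sin \<theta>) x) * e2 \<theta>)
        = (LINT \<theta>:{0..pi}|lborel. (2 * complex_of_real b) * (complex_of_real (sin \<theta>) * e2 \<theta>) - e2 \<theta>)"
      by (rule set_lebesgue_integral_cong) (auto simp: gfun_def True algebra_simps)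
    also have "\<dots> = (2 * complex_of_real b) * (LINT \<theta>:{0..pi}|lborel. complex_of_real (sin \<theta>) * e2 \<theta>)"
      using isb ie2 z by (subst set_integral_diff(2)) auto
    also have "\<dots> = - phi_div n b x"
      unfolding phi_div_def phi_def LBINT0[OF pi_ge_zero] using True by (simp add: e2_def)
    finally show ?thesis .
  next
    case False
    have cs: "continuous_on {0..pi} (\<lambda>\<theta>. complex_of_real (exp (- 2 * (b * x) * sin \<theta>)) * e2 \<theta>)"
      using ce2 by (intro continuous_intros)
    have isb: "set_integrable lborel {0..pi} (\<lambda>\<theta>. complex_of_real (exp (- 2 * (b * x) * sin \<theta>)) * e2 \<theta>)"
      by (rule borel_integrable_atLeastAtMost'[OF cs])
    have "(LINT \<theta>:{0..pi}|lborel. complex_of_real (gfun (2 * b * sin \<theta>) x) * e2 \<theta>)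
        = (LINT \<theta>:{0..pi}|lborel. complex_of_real (exp (- x) / x) * e2 \<theta>
             - (1 / complex_of_real x) * (complex_of_real (exp (- 2 * (b * x) * sin \<theta>)) * e2 \<theta>))"
      by (rule set_lebesgue_integral_cong) (auto simp: gfun_def False diff_divide_distrib algebra_simps)
    also have "\<dots> = complex_of_real (exp (- x) / x) * (LINT \<theta>:{0..pi}|lborel. e2 \<theta>)
         - (1 / complex_of_real x) * (LINT \<theta>:{0..pi}|lborel. complex_of_real (exp (- 2 * (b * x) * sin \<theta>)) * e2 \<theta>)"
      using isb ie2 by (subst set_integral_diff(2)) auto
    also have "\<dots> = - phi_div n b x"
      unfolding phi_div_def phi_def LBINT0[OF pi_ge_zero] using False z by (simp add: e2_def)
    finally show ?thesis .
  qed
  finally show ?thesis by simp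
qed


lemma expint:
  fixes a c x :: real
  assumes "a \<le> c"
  shows "(LINT s:{a..c}|lborel. exp (- s * x)) = (if x = 0 then c - a else (exp (- a * x) - exp (- c * x)) / x)"
proof -
  define G where "G = (\<lambda>s. if x = 0 then s else - exp (- s * x) / x)"
  have "(LBINT s=ereal a..ereal c. exp (- s * x)) = G c - G a"
  proof (rule interval_integral_FTC_finite)
    show "continuous_on {min a c..max a c} (\<lambda>s. exp (- s * x))" by (intro continuous_intros)
    fix s :: real
    have "(G has_real_derivative exp (- s * x)) (at s)"
    proof (cases "x = 0")
      case True then show ?thesis unfolding G_def by (auto intro!: derivative_eq_intros)
    next
      case False
      have "((\<lambda>s. - exp (- s * x) / x) has_real_derivative exp (- s * x)) (at s)"
        using False by (auto intro!: derivative_eq_intros simp: field_simps)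
      then show ?thesis unfolding G_def using False by simp
    qed
    then show "(G has_vector_derivative exp (- s * x)) (at s within {min a c..max a c})"
      by (simp add: has_real_derivative_iff_has_vector_derivative has_vector_derivative_at_within)
  qed
  then show ?thesis using assms
    by (simp add: interval_integral_Icc G_def diff_divide_distrib)
qed

lemma Krep:
  fixes K0 :: "real \<Rightarrow> real" and \<mu> :: "real measure" and t :: real
  assumes mu_borel: "sets \<mu> = sets borel"
    and laplace_finite: "\<And>t. t > 0 \<Longrightarrow> integrable \<mu> (\<lambda>x. exp (- t * x))"
    and K0_deriv: "\<And>t. t > 0 \<Longrightarrow>
         (K0 has_real_derivative (- (\<integral>x. exp (- t * x) \<partial>\<mu>))) (at t)"
    and sf: "sigma_finite_measure \<mu>"
    and t: "t > 0"
  shows "integrable \<mu> (gfun t) \<and> K0 t = K0 1 - (\<integral>x. gfun t x \<partial>\<mu>)"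
proof -
  interpret sigma_finite_measure \<mu> by (rule sf)
  interpret P: pair_sigma_finite lborel \<mu>
    by (intro pair_sigma_finite.intro lborel.sigma_finite_measure_axioms sf)
  have [measurable_cong]: "sets \<mu> = sets borel" by (rule mu_borel)
  define a where "a = min 1 t"
  define c where "c = max 1 t"
  have a0: "a > 0" using t by (simp add: a_def)
  have ac: "a \<le> c" by (simp add: a_def c_def)
  define F where "F = (\<lambda>s. \<integral>x. exp (- s * x) \<partial>\<mu>)"
  have Fm[measurable]: "F \<in> borel_measurable borel" unfolding F_def by measurable
  have "((\<lambda>s. - F s) has_integral K0 c - K0 a) {a..c}"
  proof (rule fundamental_theorem_of_calculus[OF ac])
    fix s assume "s \<in> {a..c}"
    then have "s > 0" using a0 by auto
    then have "(K0 has_real_derivative - F s) (at s)" unfolding F_def by (rule K0_deriv)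
    then show "(K0 has_vector_derivative - F s) (at s within {a..c})"
      by (simp add: has_real_derivative_iff_has_vector_derivative has_vector_derivative_at_within)
  qed
  from has_integral_neg[OF this] have hk: "(F has_integral K0 a - K0 c) {a..c}" by simp
  have Fnn: "s \<in> {a..c} \<Longrightarrow> 0 \<le> F s" for s unfolding F_def by (intro integral_nonneg_AE) simp
  have "F absolutely_integrable_on {a..c}"
    by (rule nonnegative_absolutely_integrable_1[OF has_integral_integrable[OF hk] Fnn])
  then have Fint: "set_integrable lborel {a..c} F"
    unfolding set_integrable_def by (subst (asm) integrable_completion) measurable
  have eqF: "(LINT s:{a..c}|lborel. F s) = K0 a - K0 c"
    using set_borel_integral_eq_integral(2)[OF Fint] hk by (simp add: integral_unique)
  define fc where "fc = (\<lambda>s x. indicator {a..c} s * exp (- s * x) :: real)"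
  have fint: "integrable (lborel \<Otimes>\<^sub>M \<mu>) (case_prod fc)"
  proof (rule P.Fubini_integrable)
    show "case_prod fc \<in> borel_measurable (lborel \<Otimes>\<^sub>M \<mu>)" unfolding fc_def by measurable
    have "(\<lambda>s. \<integral>x. norm (case_prod fc (s, x)) \<partial>\<mu>) = (\<lambda>s. indicator {a..c} s *\<^sub>R F s)"
      by (auto simp: fc_def F_def fun_eq_iff indicator_def)
    then show "integrable lborel (\<lambda>s. \<integral>x. norm (case_prod fc (s, x)) \<partial>\<mu>)"
      using Fint unfolding set_integrable_def by simp
    show "AE s in lborel. integrable \<mu> (\<lambda>x. case_prod fc (s, x))"
    proof (rule AE_I2)
      fix s
      show "integrable \<mu> (\<lambda>x. case_prod fc (s, x))"
      proof (cases "s \<in> {a..c}")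
        case True
        then have "s > 0" using a0 by auto
        then show ?thesis using True laplace_finite[of s] by (simp add: fc_def)
      qed (simp add: fc_def)
    qed
  qed
  define h where "h = (\<lambda>x. if x = 0 then c - a else (exp (- a * x) - exp (- c * x)) / x)"
  have inner: "(\<integral>s. fc s x \<partial>lborel) = h x" for x
    using expint[OF ac, of x] by (simp add: fc_def h_def set_lebesgue_integral_def)
  have hint: "integrable \<mu> h"
    using P.integrable_snd[OF fint] by (simp add: inner)
  have "(\<integral>x. h x \<partial>\<mu>) = (\<integral>s. (\<integral>x. fc s x \<partial>\<mu>) \<partial>lborel)"
    using P.Fubini_integral[OF fint] by (simp add: inner)
  also have "\<dots> = (LINT s:{a..c}|lborel. F s)"
    by (simp add: fc_def F_def set_lebesgue_integral_def)
  finally have eqh: "(\<integral>x. h x \<partial>\<mu>) = K0 a - K0 c" using eqF by simp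
  show ?thesis
  proof (cases "1 \<le> t")
    case True
    then have "h = gfun t" by (auto simp: h_def gfun_def a_def c_def fun_eq_iff)
    then show ?thesis using hint eqh True by (simp add: a_def c_def)
  next
    case False
    then have "h = (\<lambda>x. - gfun t x)" by (auto simp: h_def gfun_def a_def c_def fun_eq_iff field_simps)
    then show ?thesis using hint eqh False by (simp add: a_def c_def)
  qed
qed

lemma sf_mu:
  fixes \<mu> :: "real measure"
  assumes mu_borel: "sets \<mu> = sets borel"
    and L: "integrable \<mu> (\<lambda>x. exp (- x))"
  shows "sigma_finite_measure \<mu>"
proof
  have sp: "space \<mu> = UNIV" using sets_eq_imp_space_eq[OF mu_borel] by simp
  show "\<exists>A. countable A \<and> A \<subseteq> sets \<mu> \<and> \<Union> A = space \<mu> \<and> (\<forall>a\<in>A. emeasure \<mu> a \<noteq> \<infinity>)"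
  proof (intro exI[of _ "range (\<lambda>k::nat. {..real k})"] conjI ballI)
    show "countable (range (\<lambda>k::nat. {..real k}))" by (rule countable_image) simp
    show "range (\<lambda>k::nat. {..real k}) \<subseteq> sets \<mu>" unfolding mu_borel by auto
    show "\<Union> (range (\<lambda>k::nat. {..real k})) = space \<mu>"
    proof -
      have "\<exists>k::nat. x \<le> real k" for x :: real by (rule real_arch_simple)
      then show ?thesis using sp by blast
    qed
    fix a assume "a \<in> range (\<lambda>k::nat. {..real k})"
    then obtain k :: nat where a: "a = {..real k}" by auto
    have m: "(\<lambda>x::real. exp (- x)) \<in> borel_measurable \<mu>"
      using borel_measurable_integrable[OF L] .
    have "emeasure \<mu> a = (\<integral>\<^sup>+x. indicator a x \<partial>\<mu>)"
      using mu_borel a by (simp add: nn_integral_indicator)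
    also have "\<dots> \<le> (\<integral>\<^sup>+x. ennreal (exp (real k) * exp (- x)) \<partial>\<mu>)"
    proof (rule nn_integral_mono)
      fix x assume "x \<in> space \<mu>"
      show "indicator a x \<le> ennreal (exp (real k) * exp (- x))"
      proof (cases "x \<in> a")
        case True
        then have "x \<le> real k" using a by simp
        then have "1 \<le> exp (real k) * exp (- x)" by (simp add: mult_exp_exp)
        then show ?thesis using True by simp
      qed simp
    qed
    also have "\<dots> = ennreal (exp (real k)) * (\<integral>\<^sup>+x. ennreal (exp (- x)) \<partial>\<mu>)"
      using m by (simp add: nn_integral_cmult ennreal_mult)
    also have "(\<integral>\<^sup>+x. ennreal (exp (- x)) \<partial>\<mu>) = ennreal (\<integral>x. exp (- x) \<partial>\<mu>)"
      using L by (intro nn_integral_eq_integral) auto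
    finally have "emeasure \<mu> a \<le> ennreal (exp (real k)) * ennreal (\<integral>x. exp (- x) \<partial>\<mu>)" .
    also have "\<dots> = ennreal (exp (real k) * (\<integral>x. exp (- x) \<partial>\<mu>))"
      by (rule ennreal_mult[symmetric]) (auto intro: integral_nonneg_AE)
    finally show "emeasure \<mu> a \<noteq> \<infinity>"
      using ennreal_less_top top.not_eq_extremum by (metis infinity_ennreal_def order_le_less_trans)
  qed
qed


lemma gfun_sign:
  shows "1 \<le> t \<Longrightarrow> 0 \<le> gfun t x" and "t \<le> 1 \<Longrightarrow> gfun t x \<le> 0"
proof -
  assume t: "1 \<le> t"
  show "0 \<le> gfun t x"
  proof (cases "x = 0")
    case True then show ?thesis using t by (simp add: gfun_def)
  next
    case False
    show ?thesis
    proof (cases "x > 0")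
      case True
      then have "- t * x \<le> - x" using t by (simp add: mult_right_mono)
      then have "exp (- t * x) \<le> exp (- x)" by simp
      then show ?thesis using True by (simp add: gfun_def divide_nonneg_pos)
    next
      case xn: False
      then have x: "x < 0" using False by simp
      then have "- x \<le> - t * x" using t by (simp add: mult_right_mono_neg)
      then have "exp (- x) \<le> exp (- t * x)" by simp
      then show ?thesis using x by (simp add: gfun_def divide_nonpos_neg)
    qed
  qed
next
  assume t: "t \<le> 1"
  show "gfun t x \<le> 0"
  proof (cases "x = 0")
    case True then show ?thesis using t by (simp add: gfun_def)
  next
    case False
    show ?thesis
    proof (cases "x > 0")
      case True
      then have "- x \<le> - t * x" using t by (simp add: mult_right_mono)
      then have "exp (- x) \<le> exp (- t * x)" by simp
      then show ?thesis using True by (simp add: gfun_def divide_nonpos_pos)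
    next
      case xn: False
      then have x: "x < 0" using False by simp
      then have "- t * x \<le> - x" using t by (simp add: mult_right_mono_neg)
      then have "exp (- t * x) \<le> exp (- x)" by simp
      then show ?thesis using x by (simp add: gfun_def divide_nonneg_neg)
    qed
  qed
qed

lemma r_pos:
  assumes "0 < \<eta>" "\<eta> < 2 * pi" "b > 0"
  shows "cmod (complex_of_real b - complex_of_real b * exp (\<i> * complex_of_real \<eta>)) > 0"
proof -
  have "cmod (complex_of_real b - complex_of_real b * exp (\<i> * complex_of_real (2 * (\<eta>/2)))) = 2 * b * sin (\<eta>/2)"
    using assms by (intro r_double) auto
  moreover have "sin (\<eta>/2) > 0" using assms by (intro sin_gt_zero) auto
  ultimately show ?thesis using assms by simp
qed

lemma exp_int_zero2:
  assumes "n \<ge> 1"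
  shows "(LBINT \<eta>=0..2*pi. exp (\<i> * complex_of_real (real n * \<eta>))) = 0"
  using subst2[of "\<lambda>\<eta>. exp (\<i> * complex_of_real (real n * \<eta>))"] exp_int_zero[OF assms]
  by (simp add: mult_ac)


theorem lemma2p1:
  fixes K0 :: "real \<Rightarrow> real" and \<mu> :: "real measure" and b :: real and n :: nat
  assumes mu_borel: "sets \<mu> = sets borel"
    and mu_supp: "emeasure \<mu> {..<0} = 0"
    and mu_nonzero: "emeasure \<mu> (space \<mu>) \<noteq> 0"
    and laplace_finite: "\<And>t. t > 0 \<Longrightarrow> integrable \<mu> (\<lambda>x. exp (- t * x))"
    and K0_deriv: "\<And>t. t > 0 \<Longrightarrow>
         (K0 has_real_derivative (- (\<integral>x. exp (- t * x) \<partial>\<mu>))) (at t)"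
    and b_pos: "b > 0"
    and n_pos: "n \<ge> 1"
    and lambda_exists: "interval_lebesgue_integrable lborel 0 (2 * pi)
         (\<lambda>\<eta>. K0 (cmod (complex_of_real b - complex_of_real b * exp (\<i> * complex_of_real \<eta>))))"
  shows "(LBINT \<eta>=0..2 * pi. complex_of_real
             (K0 (cmod (complex_of_real b - complex_of_real b * exp (\<i> * complex_of_real \<eta>))))
             * exp (\<i> * complex_of_real (real n * \<eta>)))
         = 2 * (\<integral>x. phi_div n b x \<partial>\<mu>)"
proof -
  have sf: "sigma_finite_measure \<mu>"
    using sf_mu[OF mu_borel] laplace_finite[of 1] by simp
  interpret sigma_finite_measure \<mu> by (rule sf)
  interpret P: pair_sigma_finite lborel \<mu>
    by (intro pair_sigma_finite.intro lborel.sigma_finite_measure_axioms sf)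
  have [measurable_cong]: "sets \<mu> = sets borel" by (rule mu_borel)
  define r where "r = (\<lambda>\<eta>. cmod (complex_of_real b - complex_of_real b * exp (\<i> * complex_of_real \<eta>)))"
  define e where "e = (\<lambda>\<eta>. exp (\<i> * complex_of_real (real n * \<eta>)))"
  define I where "I = {0<..<2*pi}"
  have rm[measurable]: "r \<in> borel_measurable borel" unfolding r_def by measurable
  have em[measurable]: "e \<in> borel_measurable borel" unfolding e_def by measurable
  have Isets[measurable]: "I \<in> sets borel" unfolding I_def by simp
  have rpos: "\<eta> \<in> I \<Longrightarrow> r \<eta> > 0" for \<eta> unfolding I_def r_def using r_pos[OF _ _ b_pos] by auto
  have KR: "\<eta> \<in> I \<Longrightarrow> integrable \<mu> (gfun (r \<eta>)) \<and> K0 (r \<eta>) = K0 1 - (\<integral>x. gfun (r \<eta>) x \<partial>\<mu>)" for \<eta>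
    using Krep[OF mu_borel laplace_finite K0_deriv sf rpos] by blast
  have absint: "(\<integral>x. \<bar>gfun t x\<bar> \<partial>\<mu>) = \<bar>\<integral>x. gfun t x \<partial>\<mu>\<bar>" for t
  proof (cases "1 \<le> t")
    case True
    then have "(\<lambda>x. \<bar>gfun t x\<bar>) = gfun t" using gfun_sign(1)[OF True] by (auto simp: fun_eq_iff)
    moreover have "0 \<le> (\<integral>x. gfun t x \<partial>\<mu>)" using gfun_sign(1)[OF True] by (intro integral_nonneg_AE) auto
    ultimately show ?thesis by simp
  next
    case False
    then have F: "t \<le> 1" by simp
    then have "(\<lambda>x. \<bar>gfun t x\<bar>) = (\<lambda>x. - gfun t x)" using gfun_sign(2)[OF F] by (auto simp: fun_eq_iff)
    moreover have "0 \<le> (\<integral>x. - gfun t x \<partial>\<mu>)" using gfun_sign(2)[OF F] by (intro integral_nonneg_AE) auto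
    ultimately show ?thesis by simp
  qed
  define H where "H = (\<lambda>\<eta> x. indicator I \<eta> *\<^sub>R (complex_of_real (gfun (r \<eta>) x) * e \<eta>))"
  have Kint: "set_integrable lborel I (\<lambda>\<eta>. K0 (r \<eta>))"
    using lambda_exists unfolding interval_lebesgue_integrable_def I_def r_def by (simp add: zero_ereal_def)
  have Cint: "set_integrable lborel I (\<lambda>\<eta>. c)" for c :: real
  proof -
    have "set_integrable lborel {0..2*pi} (\<lambda>\<eta>. c)"
      by (rule borel_integrable_atLeastAtMost') (rule continuous_on_const)
    then show ?thesis by (rule set_integrable_subset) (auto simp: I_def)
  qed
  have Ceint: "set_integrable lborel I (\<lambda>\<eta>. c * e \<eta>)" for c :: complex
  proof -
    have "set_integrable lborel {0..2*pi} (\<lambda>\<eta>. c * e \<eta>)"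
      by (rule borel_integrable_atLeastAtMost') (unfold e_def, intro continuous_intros)
    then show ?thesis by (rule set_integrable_subset) (auto simp: I_def)
  qed
  have fint: "integrable (lborel \<Otimes>\<^sub>M \<mu>) (case_prod H)"
  proof (rule P.Fubini_integrable)
    show "case_prod H \<in> borel_measurable (lborel \<Otimes>\<^sub>M \<mu>)" unfolding H_def gfun_def by measurable
    have "(\<lambda>\<eta>. \<integral>x. norm (case_prod H (\<eta>, x)) \<partial>\<mu>) = (\<lambda>\<eta>. indicator I \<eta> *\<^sub>R \<bar>K0 1 - K0 (r \<eta>)\<bar>)"
    proof
      fix \<eta>
      show "(\<integral>x. norm (case_prod H (\<eta>, x)) \<partial>\<mu>) = indicator I \<eta> *\<^sub>R \<bar>K0 1 - K0 (r \<eta>)\<bar>"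
      proof (cases "\<eta> \<in> I")
        case True
        have "(\<integral>x. norm (case_prod H (\<eta>, x)) \<partial>\<mu>) = (\<integral>x. \<bar>gfun (r \<eta>) x\<bar> \<partial>\<mu>)"
          using True by (simp add: H_def e_def norm_mult)
        also have "\<dots> = \<bar>K0 1 - K0 (r \<eta>)\<bar>" using absint KR[OF True] by simp
        finally show ?thesis using True by simp
      qed (simp add: H_def)
    qed
    moreover have "set_integrable lborel I (\<lambda>\<eta>. \<bar>K0 1 - K0 (r \<eta>)\<bar>)"
      by (intro set_integrable_abs set_integral_diff(1) Kint Cint)
    ultimately show "integrable lborel (\<lambda>\<eta>. \<integral>x. norm (case_prod H (\<eta>, x)) \<partial>\<mu>)"
      unfolding set_integrable_def by simp
    show "AE \<eta> in lborel. integrable \<mu> (\<lambda>x. case_prod H (\<eta>, x))"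
    proof (rule AE_I2)
      fix \<eta>
      show "integrable \<mu> (\<lambda>x. case_prod H (\<eta>, x))"
      proof (cases "\<eta> \<in> I")
        case True
        have "integrable \<mu> (\<lambda>x. complex_of_real (gfun (r \<eta>) x))"
          using KR[OF True] by simp
        then have "integrable \<mu> (\<lambda>x. complex_of_real (gfun (r \<eta>) x) * e \<eta>)"
          by (rule integrable_mult_left)
        then show ?thesis using True by (simp add: H_def)
      qed (simp add: H_def)
    qed
  qed
  have innerx: "(\<integral>x. H \<eta> x \<partial>\<mu>) = indicator I \<eta> *\<^sub>R (complex_of_real (K0 1 - K0 (r \<eta>)) * e \<eta>)" for \<eta>
  proof (cases "\<eta> \<in> I")
    case True
    then show ?thesis using KR[OF True] by (simp add: H_def)
  qed (simp add: H_def)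
  have innereta: "(\<integral>\<eta>. H \<eta> x \<partial>lborel) = - 2 * phi_div n b x" for x
  proof -
    have "(\<integral>\<eta>. H \<eta> x \<partial>lborel) = (LBINT \<eta>=0..2*pi. complex_of_real (gfun (r \<eta>) x) * e \<eta>)"
      by (simp add: H_def interval_lebesgue_integral_def set_lebesgue_integral_def I_def zero_ereal_def)
    also have "\<dots> = - 2 * phi_div n b x"
      unfolding r_def e_def by (rule inner_eq[OF b_pos n_pos])
    finally show ?thesis .
  qed
  have intx: "integrable lborel (\<lambda>\<eta>. \<integral>x. H \<eta> x \<partial>\<mu>)"
    using P.integrable_fst[OF fint] .
  have LHS: "(LBINT \<eta>=0..2 * pi. complex_of_real (K0 (r \<eta>)) * e \<eta>)
      = (\<integral>\<eta>. indicator I \<eta> *\<^sub>R (complex_of_real (K0 1) * e \<eta>) - (\<integral>x. H \<eta> x \<partial>\<mu>) \<partial>lborel)"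
    unfolding innerx
    by (simp add: interval_lebesgue_integral_def set_lebesgue_integral_def I_def zero_ereal_def
        algebra_simps indicator_def)
  also have "\<dots> = (\<integral>\<eta>. indicator I \<eta> *\<^sub>R (complex_of_real (K0 1) * e \<eta>) \<partial>lborel) - (\<integral>\<eta>. (\<integral>x. H \<eta> x \<partial>\<mu>) \<partial>lborel)"
    using Ceint[of "complex_of_real (K0 1)"] intx unfolding set_integrable_def
    by (rule Bochner_Integration.integral_diff)
  also have "(\<integral>\<eta>. indicator I \<eta> *\<^sub>R (complex_of_real (K0 1) * e \<eta>) \<partial>lborel) = 0"
  proof -
    have "(\<integral>\<eta>. indicator I \<eta> *\<^sub>R (complex_of_real (K0 1) * e \<eta>) \<partial>lborel)
        = complex_of_real (K0 1) * (LBINT \<eta>=0..2*pi. e \<eta>)"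
    proof -
      have "(\<lambda>\<eta>. indicator I \<eta> *\<^sub>R (complex_of_real (K0 1) * e \<eta>)) = (\<lambda>\<eta>. complex_of_real (K0 1) * (indicator I \<eta> *\<^sub>R e \<eta>))"
        by (auto simp: fun_eq_iff)
      then have "(\<integral>\<eta>. indicator I \<eta> *\<^sub>R (complex_of_real (K0 1) * e \<eta>) \<partial>lborel) = complex_of_real (K0 1) * (\<integral>\<eta>. indicator I \<eta> *\<^sub>R e \<eta> \<partial>lborel)"
        by (simp only: integral_mult_right_zero)
      then show ?thesis
        by (simp add: interval_lebesgue_integral_def set_lebesgue_integral_def I_def zero_ereal_def)
    qed
    also have "\<dots> = 0" using exp_int_zero2[OF n_pos] by (simp add: e_def)
    finally show ?thesis .
  qed
  also have "(\<integral>\<eta>. (\<integral>x. H \<eta> x \<partial>\<mu>) \<partial>lborel) = (\<integral>x. (\<integral>\<eta>. H \<eta> x \<partial>lborel) \<partial>\<mu>)"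
    using P.Fubini_integral[OF fint] by simp
  also have "\<dots> = (\<integral>x. - 2 * phi_div n b x \<partial>\<mu>)" by (simp add: innereta)
  also have "\<dots> = - 2 * (\<integral>x. phi_div n b x \<partial>\<mu>)" by (rule integral_mult_right_zero)
  finally show ?thesis by (simp add: r_def e_def)
qed

end
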